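(* Let $d$ be a positive integer, let $\mathcal{T}_{d+1}$ be the $(d+1)$-regular tree with a fixed origin $0$, and let $\delta_0$ be the function on $\mathcal{T}_{d+1}$ equal to $1$ at $0$ and $0$ elsewhere. Let $n$ be a positive even integer. Then for $x\in\mathcal{T}_{d+1}$, writing $|x|$ for the distance from $x$ to $0$, $$P_n(T_d/2)\delta_0(x)=\begin{cases}0 & |x| \text{ odd or } |x|>n,\\[2pt] \dfrac{1-d}{2d^{n/2}} & |x|<n \text{ and } |x| \text{ even},\\[4pt] \dfrac{1}{2d^{n/2}} & |x|=n.\end{cases}$$ In particular, $|P_n(T_d/2)\delta_0(x)|\lesssim d^{-n/2}$ for all $x$ (with implied constant depending only on $d$).
   Context: $T_d$ is the operator on functions on $\mathcal{T}_{d+1}$ given by $T_d f(x)=\frac{1}{\sqrt d}\sum_{y:\operatorname{dist}(x,y)=1}f(y)$. $P_n$ is the Chebyshev polynomial of the first kind of degree $n$, defined by $P_n(\cos\theta)=\cos n\theta$, and $P_n(T_d/2)$ is the corresponding polynomial in the operator $T_d/2$. *)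

theory Defs
  imports "HOL-Analysis.Analysis" "HOL-Computational_Algebra.Polynomial"
begin

text \<open>The (d+1)-regular tree: vertices are the reduced words over the alphabet {0..d}
  (no two consecutive letters equal), i.e. the Cayley graph of the free product of d+1
  copies of Z/2.  The origin is the empty word; two vertices are adjacent iff one is
  obtained from the other by prepending a single letter.  The graph distance from a
  vertex to the origin is the length of the word.\<close>

definition tree_vertex :: "nat \<Rightarrow> nat list \<Rightarrow> bool" where
  "tree_vertex d w \<longleftrightarrow> set w \<subseteq> {0..d} \<and> (\<forall>i. Suc i < length w \<longrightarrow> w ! i \<noteq> w ! Suc i)"

definition tree_adj :: "nat \<Rightarrow> nat list \<Rightarrow> nat list \<Rightarrow> bool" where
  "tree_adj d x y \<longleftrightarrow> tree_vertex d x \<and> tree_vertex d y \<and>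
     ((\<exists>a. y = a # x) \<or> (\<exists>a. x = a # y))"

definition tree_neighbors :: "nat \<Rightarrow> nat list \<Rightarrow> nat list set" where
  "tree_neighbors d x = {y. tree_adj d x y}"

definition T_op :: "nat \<Rightarrow> (nat list \<Rightarrow> real) \<Rightarrow> (nat list \<Rightarrow> real)" where
  "T_op d f = (\<lambda>x. (1 / sqrt (real d)) * (\<Sum>y\<in>tree_neighbors d x. f y))"

definition delta0 :: "nat list \<Rightarrow> real" where
  "delta0 = (\<lambda>x. if x = [] then 1 else 0)"

text \<open>Chebyshev polynomials of the first kind (P_n(cos t) = cos (n t)), via the standard
  three-term recurrence.\<close>
fun cheb :: "nat \<Rightarrow> real poly" where
  "cheb 0 = 1"
| "cheb (Suc 0) = [:0, 1:]"
| "cheb (Suc (Suc n)) = [:0, 2:] * cheb (Suc n) - cheb n"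

definition poly_op :: "real poly \<Rightarrow> (('a \<Rightarrow> real) \<Rightarrow> ('a \<Rightarrow> real)) \<Rightarrow> ('a \<Rightarrow> real) \<Rightarrow> ('a \<Rightarrow> real)" where
  "poly_op p A f = (\<lambda>x. \<Sum>k\<le>degree p. coeff p k * (A ^^ k) f x)"

end

theory Submission imports Defs begin

lemma poly_op_ext:
  assumes "degree p \<le> N"
  shows "poly_op p A f x = (\<Sum>k\<le>N. coeff p k * (A ^^ k) f x)"
  unfolding poly_op_def
  by (rule sum.mono_neutral_left) (use assms in \<open>auto simp: coeff_eq_0\<close>)

lemma poly_op_diff:
  "poly_op (p - q) A f x = poly_op p A f x - poly_op q A f x"
proof -
  define N where "N = max (degree p) (degree q)"
  have "degree (p - q) \<le> N" unfolding N_def by (rule degree_diff_le) auto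
  then show ?thesis
    by (simp add: poly_op_ext[of _ N] N_def left_diff_distrib sum_subtractf)
qed

lemma T_op_lin:
  "T_op d (\<lambda>x. \<Sum>k\<in>K. c k * g k x) y = (\<Sum>k\<in>K. c k * T_op d (g k) y)"
  unfolding T_op_def
  by (simp add: sum.swap[of _ "tree_neighbors d y"] sum_distrib_left mult_ac)

lemma cheb_shift: "[:0, 2:] * p = pCons 0 (smult 2 p)"
  by (simp add: mult_pCons_left)

lemma poly_op_x2:
  "poly_op ([:0, 2:] * p) (\<lambda>f y. T_op d f y / 2) f x
     = T_op d (poly_op p (\<lambda>f y. T_op d f y / 2) f) x"
proof -
  let ?A = "(\<lambda>f y. T_op d f y / 2)"
  define N where "N = degree p"
  have "degree ([:0, 2:] * p) \<le> Suc N" unfolding cheb_shift N_def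
    by (metis degree_pCons_le degree_smult_le le_trans not_less_eq_eq)
  then have "poly_op ([:0, 2:] * p) ?A f x = (\<Sum>k\<le>Suc N. coeff ([:0, 2:] * p) k * (?A ^^ k) f x)"
    by (rule poly_op_ext)
  also have "\<dots> = (\<Sum>k\<le>N. 2 * coeff p k * (?A ^^ Suc k) f x)"
    by (subst sum.atMost_Suc_shift) (simp add: cheb_shift del: sum.atMost_Suc)
  also have "\<dots> = (\<Sum>k\<le>N. coeff p k * T_op d ((?A ^^ k) f) x)"
    by simp
  also have "\<dots> = T_op d (poly_op p ?A f) x"
    unfolding poly_op_def N_def by (rule T_op_lin[symmetric])
  finally show ?thesis .
qed

definition Q where "Q d n = poly_op (cheb n) (\<lambda>f y. T_op d f y / 2) delta0"

lemma Q_rec: "Q d (Suc (Suc n)) x = T_op d (Q d (Suc n)) x - Q d n x"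
  unfolding Q_def by (simp only: cheb.simps poly_op_diff poly_op_x2)

lemma Q0: "Q d 0 x = delta0 x"
  unfolding Q_def poly_op_def by simp
lemma Q1: "Q d 1 x = T_op d delta0 x / 2"
  unfolding Q_def poly_op_def by simp

lemma tv_Nil[simp]: "tree_vertex d []" by (simp add: tree_vertex_def)

lemma tv_Cons: "tree_vertex d (a#x) \<longleftrightarrow> a \<le> d \<and> tree_vertex d x \<and> (x \<noteq> [] \<longrightarrow> a \<noteq> hd x)"
proof
  assume h: "tree_vertex d (a#x)"
  have "tree_vertex d x" unfolding tree_vertex_def
  proof safe
    fix z assume "z \<in> set x" then show "z \<in> {0..d}" using h by (auto simp: tree_vertex_def)
  next
    fix i assume "Suc i < length x" "x ! i = x ! Suc i"
    then show False using h[unfolded tree_vertex_def] by (metis Suc_less_eq length_Cons nth_Cons_Suc)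
  qed
  moreover have "x \<noteq> [] \<longrightarrow> a \<noteq> hd x"
  proof
    assume "x \<noteq> []"
    then have "Suc 0 < length (a#x)" by simp
    then have "(a#x) ! 0 \<noteq> (a#x) ! Suc 0" using h unfolding tree_vertex_def by blast
    then show "a \<noteq> hd x" using \<open>x \<noteq> []\<close> by (simp add: hd_conv_nth)
  qed
  ultimately show "a \<le> d \<and> tree_vertex d x \<and> (x \<noteq> [] \<longrightarrow> a \<noteq> hd x)" using h by (auto simp: tree_vertex_def)
next
  assume h: "a \<le> d \<and> tree_vertex d x \<and> (x \<noteq> [] \<longrightarrow> a \<noteq> hd x)"
  show "tree_vertex d (a#x)" unfolding tree_vertex_def
  proof safe
    fix z assume "z \<in> set (a#x)" then show "z \<in> {0..d}" using h by (auto simp: tree_vertex_def)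
  next
    fix i assume i: "Suc i < length (a#x)" "(a#x) ! i = (a#x) ! Suc i"
    show False
    proof (cases i)
      case 0 then show False using h i by (auto simp: hd_conv_nth)
    next
      case (Suc j) then show False using h i by (auto simp: tree_vertex_def)
    qed
  qed
qed

lemma nbr_Nil: "tree_neighbors d [] = (\<lambda>a. [a]) ` {0..d}"
  by (auto simp: tree_neighbors_def tree_adj_def tv_Cons)

lemma nbr_Cons: "tree_vertex d (b#t) \<Longrightarrow>
   tree_neighbors d (b#t) = insert t ((\<lambda>a. a#b#t) ` ({0..d}-{b}))"
  by (auto simp: tree_neighbors_def tree_adj_def tv_Cons)

lemma nbr_sum:
  assumes "tree_vertex d x" "\<And>y. tree_vertex d y \<Longrightarrow> g y = h (length y)"
  shows "(\<Sum>y\<in>tree_neighbors d x. g y) =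
     (if x = [] then real (d+1) * h 1 else h (length x - 1) + real d * h (length x + 1))"
proof (cases x)
  case Nil
  have "(\<Sum>y\<in>tree_neighbors d x. g y) = (\<Sum>a\<in>{0..d}. g [a])"
    unfolding Nil nbr_Nil by (subst sum.reindex) (auto simp: inj_on_def)
  also have "\<dots> = (\<Sum>a\<in>{0..d}. h 1)" using assms(2) by (intro sum.cong) (auto simp: tv_Cons)
  finally show ?thesis using Nil by simp
next
  case (Cons b t)
  have bd: "b \<le> d" using assms(1) Cons by (simp add: tv_Cons)
  have fin: "finite ((\<lambda>a. a#b#t) ` ({0..d}-{b}))" by simp
  have nt: "t \<notin> (\<lambda>a. a#b#t) ` ({0..d}-{b})" by auto
  have "(\<Sum>y\<in>tree_neighbors d x. g y) = g t + (\<Sum>a\<in>{0..d}-{b}. g (a#b#t))"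
    unfolding Cons nbr_Cons[OF assms(1)[unfolded Cons]]
    by (subst sum.insert[OF fin nt]) (subst sum.reindex, auto simp: inj_on_def)
  also have "\<dots> = h (length t) + (\<Sum>a\<in>{0..d}-{b}. h (length t + 2))"
    using assms Cons by (intro arg_cong2[where f="(+)"] sum.cong) (auto simp: tv_Cons)
  moreover have "card ({0..d}-{b}) = d" using bd by simp
  ultimately show ?thesis using Cons by simp
qed

definition F :: "nat \<Rightarrow> nat \<Rightarrow> nat \<Rightarrow> real" where
  "F d n r = (if n < r \<or> odd (n+r) then 0 else if r < n then (1 - real d)/(2 * sqrt d ^ n) else 1/(2 * sqrt d ^ n))"

lemma step_arith:
  assumes d: "d \<ge> 1" and m: "m \<ge> 1"
  shows "(1 / sqrt d) * (if r = 0 then real (d+1) * F d (Suc m) 1 else F d (Suc m) (r - 1) + real d * F d (Suc m) (r + 1))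
     - F d m r = F d (Suc (Suc m)) r"
proof -
  define s where "s = sqrt d"
  have s: "s > 0" using d by (auto simp: s_def)
  have dd: "real d = s * s" using d by (simp add: s_def)
  have um: "s ^ m > 0" using s by simp
  show ?thesis
  proof (cases r)
    case 0
    then show ?thesis using m s um unfolding F_def s_def[symmetric] of_nat_add of_nat_1 dd
      by (auto simp: field_simps)
  next
    case (Suc k)
    then show ?thesis using m s um unfolding F_def s_def[symmetric] of_nat_add of_nat_1 dd
      by (auto simp: field_simps)
  qed
qed

lemma base2_arith:
  assumes d: "d \<ge> 1"
  shows "(1 / sqrt d) * (if r = 0 then real (d+1) * F d 1 1 else F d 1 (r - 1) + real d * F d 1 (r + 1))
     - (if r = 0 then 1 else 0) = F d 2 r"
proof -
  define s where "s = sqrt d"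
  have s: "s > 0" using d by (auto simp: s_def)
  have dd: "real d = s * s" using d by (simp add: s_def)
  show ?thesis
  proof (cases r)
    case 0
    then show ?thesis using s unfolding F_def s_def[symmetric] of_nat_add of_nat_1 dd
      by (auto simp: field_simps power2_eq_square)
  next
    case (Suc k)
    then show ?thesis using s unfolding F_def s_def[symmetric] of_nat_add of_nat_1 dd
      by (auto simp: field_simps power2_eq_square)
  qed
qed

lemma Q_F_pair:
  assumes d: "d \<ge> 1"
  shows "(\<forall>x. tree_vertex d x \<longrightarrow> Q d (Suc k) x = F d (Suc k) (length x)) \<and>
         (\<forall>x. tree_vertex d x \<longrightarrow> Q d (Suc (Suc k)) x = F d (Suc (Suc k)) (length x))"
proof (induction k)
  case 0
  have P1: "Q d 1 x = F d 1 (length x)" if "tree_vertex d x" for x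
  proof -
    have "Q d 1 x = (1 / sqrt d) * (\<Sum>y\<in>tree_neighbors d x. delta0 y) / 2"
      unfolding Q1 T_op_def by simp
    also have "(\<Sum>y\<in>tree_neighbors d x. delta0 y) = (if x = [] then 0 else if length x = 1 then 1 else 0)"
    proof -
      have pr: "\<And>y. tree_vertex d y \<Longrightarrow> delta0 y = (\<lambda>r::nat. if r = 0 then (1::real) else 0) (length y)"
        by (simp add: delta0_def)
      have e: "(\<Sum>y\<in>tree_neighbors d x. delta0 y) = (if x = [] then real (d + 1) * (\<lambda>r::nat. if r = 0 then (1::real) else 0) 1
          else (\<lambda>r::nat. if r = 0 then (1::real) else 0) (length x - 1) + real d * (\<lambda>r::nat. if r = 0 then (1::real) else 0) (length x + 1))"
        by (rule nbr_sum[of d x delta0 "\<lambda>r::nat. if r = 0 then (1::real) else 0", OF that pr])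
      show ?thesis using e by (cases x) auto
    qed
    finally show ?thesis by (cases x) (auto simp: F_def)
  qed
  have "Q d 2 x = F d 2 (length x)" if "tree_vertex d x" for x
  proof -
    have "Q d 2 x = T_op d (Q d 1) x - Q d 0 x"
      using Q_rec[of d 0 x] by (simp add: numeral_2_eq_2)
    also have "\<dots> = (1 / sqrt d) * (if x = [] then real (d+1) * F d 1 1 else F d 1 (length x - 1) + real d * F d 1 (length x + 1))
       - (if length x = 0 then 1 else 0)"
      unfolding T_op_def Q0 by (subst nbr_sum[OF that, of _ "F d 1"]) (auto simp: P1 P1[unfolded One_nat_def] delta0_def)
    also have "\<dots> = F d 2 (length x)" using base2_arith[OF d, of "length x"] by simp
    finally show ?thesis .
  qed
  then show ?case using P1 by (simp add: numeral_2_eq_2)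
next
  case (Suc k)
  have "Q d (Suc (Suc (Suc k))) x = F d (Suc (Suc (Suc k))) (length x)" if "tree_vertex d x" for x
  proof -
    have "Q d (Suc (Suc (Suc k))) x = T_op d (Q d (Suc (Suc k))) x - Q d (Suc k) x"
      by (rule Q_rec)
    also have "\<dots> = (1 / sqrt d) * (if length x = 0 then real (d+1) * F d (Suc (Suc k)) 1 else F d (Suc (Suc k)) (length x - 1) + real d * F d (Suc (Suc k)) (length x + 1))
       - F d (Suc k) (length x)"
      unfolding T_op_def by (subst nbr_sum[OF that, of _ "F d (Suc (Suc k))"]) (use Suc that in auto)
    also have "\<dots> = F d (Suc (Suc (Suc k))) (length x)" by (rule step_arith[OF d]) simp
    finally show ?thesis .
  qed
  then show ?case using Suc by blast
qed

lemma Q_F: "d \<ge> 1 \<Longrightarrow> n > 0 \<Longrightarrow> tree_vertex d x \<Longrightarrow> Q d n x = F d n (length x)"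
  using Q_F_pair[of d "n - 1"] by (cases n) auto

lemma sqrt_pow_even: "even n \<Longrightarrow> sqrt (real d) ^ n = real d ^ (n div 2)"
  by (elim evenE) (simp add: power_mult)

lemma F_even:
  assumes "even n"
  shows "F d n r = (if odd r \<or> r > n then 0
               else if r < n then (1 - real d) / (2 * real d ^ (n div 2))
               else 1 / (2 * real d ^ (n div 2)))"
  using assms unfolding F_def sqrt_pow_even[OF assms] by auto

lemma e1: "(X::real) > 0 \<Longrightarrow> (d::nat) \<ge> 1 \<Longrightarrow> \<bar>(1 - real d)/(2*X)\<bar> \<le> real d / X"
  by (simp add: abs_divide divide_simps)
lemma e2: "(X::real) > 0 \<Longrightarrow> (d::nat) \<ge> 1 \<Longrightarrow> \<bar>1/(2*X)\<bar> \<le> real d / X"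
  by (simp add: abs_divide divide_simps)

lemma e3: "(X::real) > 0 \<Longrightarrow> (d::nat) \<ge> 1 \<Longrightarrow>
  \<bar>(if A then 0 else if B then (1 - real d)/(2*X) else 1/(2*X))\<bar> \<le> real d / X"
  using e1[of X d] e2[of X d] by auto

theorem lemma1:
  fixes d :: nat
  assumes "d \<ge> 1"
  shows "(\<forall>n x. n > 0 \<longrightarrow> even n \<longrightarrow> tree_vertex d x \<longrightarrow>
            poly_op (cheb n) (\<lambda>f y. T_op d f y / 2) delta0 x =
              (if odd (length x) \<or> length x > n then 0
               else if length x < n then (1 - real d) / (2 * real d ^ (n div 2))
               else 1 / (2 * real d ^ (n div 2))))
       \<and> (\<exists>C>0. \<forall>n x. n > 0 \<longrightarrow> even n \<longrightarrow> tree_vertex d x \<longrightarrow>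
            \<bar>poly_op (cheb n) (\<lambda>f y. T_op d f y / 2) delta0 x\<bar> \<le> C * real d powr (- real n / 2))"
proof (intro conjI allI impI)
  fix n :: nat and x :: "nat list" assume n: "n > 0" "even n" "tree_vertex d x"
  show "poly_op (cheb n) (\<lambda>f y. T_op d f y / 2) delta0 x =
              (if odd (length x) \<or> length x > n then 0
               else if length x < n then (1 - real d) / (2 * real d ^ (n div 2))
               else 1 / (2 * real d ^ (n div 2)))"
    using Q_F[OF assms n(1,3)] F_even[OF n(2)] unfolding Q_def by simp
next
  show "\<exists>C>0. \<forall>n x. n > 0 \<longrightarrow> even n \<longrightarrow> tree_vertex d x \<longrightarrow>
            \<bar>poly_op (cheb n) (\<lambda>f y. T_op d f y / 2) delta0 x\<bar> \<le> C * real d powr (- real n / 2)"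
  proof (intro exI[of _ "real d"] conjI allI impI)
    show "real d > 0" using assms by simp
    fix n :: nat and x :: "nat list" assume n: "n > 0" "even n" "tree_vertex d x"
    have pw: "real d powr (- real n / 2) = 1 / real d ^ (n div 2)"
    proof -
      have "- real n / 2 = - real (n div 2)" using n(2) by (elim evenE) simp
      have "real d powr (- real n / 2) = real d powr (- real (n div 2))" by (simp only: \<open>- real n / 2 = - real (n div 2)\<close>)
      also have "\<dots> = inverse (real d powr real (n div 2))" by (rule powr_minus)
      also have "real d powr real (n div 2) = real d ^ (n div 2)" using assms by (intro powr_realpow) simp
      finally show ?thesis by (simp add: inverse_eq_divide)
    qed
    have D: "real d ^ (n div 2) > 0" using assms by simp
    have "\<bar>F d n (length x)\<bar> \<le> real d / real d ^ (n div 2)"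
      unfolding F_even[OF n(2)] by (rule e3[OF D assms])
    then show "\<bar>poly_op (cheb n) (\<lambda>f y. T_op d f y / 2) delta0 x\<bar> \<le> real d * real d powr (- real n / 2)"
      using Q_F[OF assms n(1,3)] unfolding Q_def pw by simp
  qed
qed

end
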